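(* In the setting below, suppose $n\ge 3$ and let $p,q\in X$ with $S_p\cup S_q=E$ and $|S_p\cap S_q|=n-1$. Let $\{e_a\}=S_p\setminus S_q$, $\{e_b\}=S_q\setminus S_p$, and write $p=\sum_{e_i\in S_p}\lambda_ie_i$, $q=\sum_{e_i\in S_q}\theta_ie_i$ (normalized by the convention). Then $\lambda_a>1$, $\theta_b>1$, and $\lambda_a\theta_b\ge\lambda_a+\theta_b$.
   Context: Setting: $E=\{e_0,\dots,e_n\}\subset\mathbb R^n$ is the vertex set of an $n$-simplex with $e_0+\cdots+e_n=0$, and $X\subset\mathbb R^n\setminus\{0\}$ is a finite set with $E\subseteq X$, no element of $X$ a positive multiple of another, such that every $n+1$ points of $X$ are in good position. (A finite set $A$ is in conical position if $0\notin\operatorname{conv}A$ and no point of $A$ lies in the positive hull—set of nonnegative linear combinations—of the other points; it is in good position otherwise.) For $p\in X$, the support $S_p$ is the minimal subset of $E$ whose positive hull contains $p$; then $p=\sum_{e_i\in S_p}\lambda_ie_i$ uniquely with all $\lambda_i>0$. Convention: each $p\in X$ is replaced by the positive multiple for which $\min_{e_i\in S_p}\lambda_i=1$. *)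

theory Defs
  imports "HOL-Analysis.Analysis"
begin

definition pos_hull :: "'a::real_vector set \<Rightarrow> 'a set" where
  "pos_hull A = {(\<Sum>a\<in>F. c a *\<^sub>R a) | F c. finite F \<and> F \<subseteq> A \<and> (\<forall>a\<in>F. 0 \<le> c a)}"

definition conical_position :: "'a::real_vector set \<Rightarrow> bool" where
  "conical_position A \<longleftrightarrow> 0 \<notin> convex hull A \<and> (\<forall>a\<in>A. a \<notin> pos_hull (A - {a}))"

definition good_position :: "'a::real_vector set \<Rightarrow> bool" where
  "good_position A \<longleftrightarrow> \<not> conical_position A"

definition is_support :: "(nat \<Rightarrow> 'a::real_vector) \<Rightarrow> nat set \<Rightarrow> nat set \<Rightarrow> 'a \<Rightarrow> bool" where
  "is_support e I S p \<longleftrightarrow> S \<subseteq> I \<and> p \<in> pos_hull (e ` S) \<and> (\<forall>T. T \<subset> S \<longrightarrow> p \<notin> pos_hull (e ` T))"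

end

theory Submission
  imports Defs
begin

lemma all_equal:
  fixes e :: "nat \<Rightarrow> 'a::real_vector"
  assumes ind: "\<not> affine_dependent (e ` {0..n})" and inj: "inj_on e {0..n}"
    and es: "(\<Sum>i = 0..n. e i) = 0" and C: "(\<Sum>i = 0..n. C i *\<^sub>R e i) = 0"
    and ij: "i \<le> n" "j \<le> n"
  shows "C i = C j"
proof -
  define N where "N = {0..n}"
  define m where "m = (\<Sum>i\<in>N. C i) / real (n+1)"
  define u where "u = (\<lambda>v. C (inv_into N e v) - m)"
  have cN: "card N = n+1" unfolding N_def by simp
  have uc: "u (e k) = C k - m" if "k \<in> N" for k
    using that inj unfolding u_def N_def by simp
  have s1: "sum u (e ` N) = 0"
  proof -
    have "sum u (e ` N) = (\<Sum>k\<in>N. C k - m)"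
      using inj uc unfolding N_def by (simp add: sum.reindex)
    also have "\<dots> = (\<Sum>k\<in>N. C k) - real (n+1) * m" by (simp add: sum_subtractf cN)
    also have "\<dots> = 0" unfolding m_def by simp
    finally show ?thesis .
  qed
  have s2: "(\<Sum>v\<in>e ` N. u v *\<^sub>R v) = 0"
  proof -
    have "(\<Sum>v\<in>e ` N. u v *\<^sub>R v) = (\<Sum>k\<in>N. (C k - m) *\<^sub>R e k)"
      using inj uc unfolding N_def by (simp add: sum.reindex)
    also have "\<dots> = (\<Sum>k\<in>N. C k *\<^sub>R e k) - m *\<^sub>R (\<Sum>k\<in>N. e k)"
      by (simp add: scaleR_diff_left sum_subtractf scaleR_sum_right)
    also have "\<dots> = 0" using C es unfolding N_def by simp
    finally show ?thesis .
  qed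
  have "\<forall>v\<in>e ` N. u v = 0"
  proof (rule ccontr)
    assume "\<not> (\<forall>v\<in>e ` N. u v = 0)"
    then have "affine_dependent (e ` N)"
      unfolding affine_dependent_explicit using s1 s2
      apply -
      apply (rule exI[where x="e ` N"], rule exI[where x=u])
      by (auto simp: N_def)
    then show False using ind unfolding N_def by simp
  qed
  then have "C k = m" if "k \<in> N" for k using uc that by force
  then show ?thesis using ij unfolding N_def by simp
qed

theorem proposition6p7:
  fixes e :: "nat \<Rightarrow> real ^ 'n"
    and X :: "(real ^ 'n) set"
    and n :: nat
    and p q :: "real ^ 'n"
    and Sp Sq :: "nat set"
    and lam theta :: "nat \<Rightarrow> real"
    and a b :: nat
  assumes n_def: "n = CARD('n)"
    and n_ge: "n \<ge> 3"
    and e_inj: "inj_on e {0..n}"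
    and e_simplex: "\<not> affine_dependent (e ` {0..n})"
    and e_sum: "(\<Sum>i = 0..n. e i) = 0"
    and X_fin: "finite X"
    and X_nz: "0 \<notin> X"
    and E_sub: "e ` {0..n} \<subseteq> X"
    and X_nomult: "\<And>x y c. x \<in> X \<Longrightarrow> y \<in> X \<Longrightarrow> x \<noteq> y \<Longrightarrow> 0 < c \<Longrightarrow> x \<noteq> c *\<^sub>R y"
    and X_good: "\<And>A. A \<subseteq> X \<Longrightarrow> card A = n + 1 \<Longrightarrow> good_position A"
    and pX: "p \<in> X" and qX: "q \<in> X"
    and Sp_supp: "is_support e {0..n} Sp p"
    and Sq_supp: "is_support e {0..n} Sq q"
    and lam_pos: "\<And>i. i \<in> Sp \<Longrightarrow> 0 < lam i"
    and p_eq: "p = (\<Sum>i\<in>Sp. lam i *\<^sub>R e i)"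
    and lam_norm: "Min (lam ` Sp) = 1"
    and theta_pos: "\<And>i. i \<in> Sq \<Longrightarrow> 0 < theta i"
    and q_eq: "q = (\<Sum>i\<in>Sq. theta i *\<^sub>R e i)"
    and theta_norm: "Min (theta ` Sq) = 1"
    and union: "Sp \<union> Sq = {0..n}"
    and inter: "card (Sp \<inter> Sq) = n - 1"
    and a_def: "Sp - Sq = {a}"
    and b_def: "Sq - Sp = {b}"
  shows "1 < lam a \<and> 1 < theta b \<and> lam a + theta b \<le> lam a * theta b"
  proof -
  define N where "N = {0..n}"
  have finN: "finite N" unfolding N_def by simp
  have SpN: "Sp \<subseteq> N" "Sq \<subseteq> N" using union unfolding N_def by auto
  have aSp: "a \<in> Sp" "a \<notin> Sq" using a_def by auto
  have bSq: "b \<in> Sq" "b \<notin> Sp" using b_def by auto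
  have aN: "a \<in> N" and bN: "b \<in> N" using SpN aSp bSq by auto
  have ab: "a \<noteq> b" using aSp bSq by auto
  have Sp_eq: "Sp = N - {b}" using union b_def SpN unfolding N_def by auto
  have Sq_eq: "Sq = N - {a}" using union a_def SpN unfolding N_def by auto
  define I where "I = N - {a, b}"
  have I_sub: "I \<subseteq> Sp" "I \<subseteq> Sq" "I \<subseteq> N" unfolding I_def Sp_eq Sq_eq by auto
  have aI: "a \<notin> I" and bI: "b \<notin> I" unfolding I_def by auto
  have finI: "finite I" using finN unfolding I_def by simp
  have cardI: "card I = n - 1"
  proof -
    have "Sp \<inter> Sq = I" unfolding I_def Sp_eq Sq_eq by auto
    then show ?thesis using inter by simp
  qed
  have cI2: "card I \<ge> 2" using cardI n_ge by simp
  have finSp: "finite Sp" "finite Sq" using SpN finN finite_subset by auto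
  have lam_ge: "\<And>i. i \<in> Sp \<Longrightarrow> 1 \<le> lam i"
    using lam_norm finSp by (metis Min_le finite_imageI imageI)
  have theta_ge: "\<And>i. i \<in> Sq \<Longrightarrow> 1 \<le> theta i"
    using theta_norm finSp by (metis Min_le finite_imageI imageI)
  have la0: "0 < lam a" using lam_pos aSp by simp
  have tb0: "0 < theta b" using theta_pos bSq by simp
  define lp where "lp i = (if i \<in> Sp then lam i else 0)" for i
  define tq where "tq i = (if i \<in> Sq then theta i else 0)" for i
  have p_N: "p = (\<Sum>i\<in>N. lp i *\<^sub>R e i)"
  proof -
    have "(\<Sum>i\<in>N. lp i *\<^sub>R e i) = (\<Sum>i\<in>N. if i \<in> Sp then lam i *\<^sub>R e i else 0)"
      unfolding lp_def by (rule sum.cong) auto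
    also have "\<dots> = (\<Sum>i\<in>N \<inter> Sp. lam i *\<^sub>R e i)" using finN by (simp add: sum.inter_restrict)
    also have "N \<inter> Sp = Sp" using SpN by auto
    finally show ?thesis using p_eq by simp
  qed
  have q_N: "q = (\<Sum>i\<in>N. tq i *\<^sub>R e i)"
  proof -
    have "(\<Sum>i\<in>N. tq i *\<^sub>R e i) = (\<Sum>i\<in>N. if i \<in> Sq then theta i *\<^sub>R e i else 0)"
      unfolding tq_def by (rule sum.cong) auto
    also have "\<dots> = (\<Sum>i\<in>N \<inter> Sq. theta i *\<^sub>R e i)" using finN by (simp add: sum.inter_restrict)
    also have "N \<inter> Sq = Sq" using SpN by auto
    finally show ?thesis using q_eq by simp
  qed
  have AE: "C i = C j" if "(\<Sum>i\<in>N. C i *\<^sub>R e i) = 0" "i \<in> N" "j \<in> N" for C i j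
    using all_equal[OF e_simplex e_inj e_sum, of C i j] that unfolding N_def by auto
  have ek: "e k = (\<Sum>i\<in>N. (if i = k then 1 else 0) *\<^sub>R e i)" if "k \<in> N" for k
  proof -
    have "(\<Sum>i\<in>N. (if i = k then 1 else 0) *\<^sub>R e i) = (\<Sum>i\<in>N. if i = k then e i else 0)"
      by (rule sum.cong) auto
    then show ?thesis using that finN by simp
  qed
  have lpa: "lp a = lam a" "lp b = 0" "tq a = 0" "tq b = theta b"
    using aSp bSq unfolding lp_def tq_def by auto
  have p_ne_e: "p \<noteq> e k" if "k \<in> I" for k
  proof
    assume h: "p = e k"
    have kN: "k \<in> N" using that I_sub by auto
    have "(\<Sum>i\<in>N. (lp i - (if i = k then 1 else 0)) *\<^sub>R e i) = 0"
      using p_N ek[OF kN] h by (simp add: scaleR_diff_left sum_subtractf)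
    from AE[OF this aN bN] show False using lpa la0 that aI bI by (cases "a = k"; cases "b = k") auto
  qed
  have q_ne_e: "q \<noteq> e k" if "k \<in> I" for k
  proof
    assume h: "q = e k"
    have kN: "k \<in> N" using that I_sub by auto
    have "(\<Sum>i\<in>N. (tq i - (if i = k then 1 else 0)) *\<^sub>R e i) = 0"
      using q_N ek[OF kN] h by (simp add: scaleR_diff_left sum_subtractf)
    from AE[OF this aN bN] show False using lpa tb0 that aI bI by (cases "a = k"; cases "b = k") auto
  qed
  have p_ne_q: "p \<noteq> q"
  proof
    assume h: "p = q"
    have "(\<Sum>i\<in>N. (lp i - tq i) *\<^sub>R e i) = 0"
      using p_N q_N h by (simp add: scaleR_diff_left sum_subtractf)
    from AE[OF this aN bN] show False using lpa tb0 la0 by auto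
  qed
  define A where "A = insert p (insert q (e ` I))"
  have injI: "inj_on e I" using e_inj I_sub unfolding N_def by (auto intro: inj_on_subset)
  have pnot: "p \<notin> insert q (e ` I)" using p_ne_q p_ne_e by auto
  have qnot: "q \<notin> e ` I" using q_ne_e by auto
  have finA: "finite A" unfolding A_def using finI by simp
  have sumA: "sum g A = g p + g q + (\<Sum>k\<in>I. g (e k))" for g :: "real ^ 'n \<Rightarrow> 'b::comm_monoid_add"
    unfolding A_def using pnot qnot finI injI by (simp add: sum.reindex add.assoc)
  have cardA: "card A = n + 1"
  proof -
    have "card A = card (e ` I) + 2" unfolding A_def using pnot qnot finI by simp
    also have "card (e ` I) = n - 1" using card_image[OF injI] cardI by simp
    finally show ?thesis using n_ge by simp
  qed
  have AX: "A \<subseteq> X" unfolding A_def using pX qX E_sub I_sub unfolding N_def by blast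
  have good: "good_position A" using X_good[OF AX cardA] .
  define f where "f k = lam k / lam a + theta k / theta b" for k
  have key: "w (e k) = (w p * lam a) * (1 - f k) \<and> w q * theta b = w p * lam a"
    if ws: "(\<Sum>y\<in>A. w y *\<^sub>R y) = 0" and kI: "k \<in> I" for w k
  proof -
    define C where "C i = (if i \<in> I then w (e i) else 0) + w p * lp i + w q * tq i" for i
    have "(\<Sum>i\<in>N. C i *\<^sub>R e i) = (\<Sum>i\<in>N. (if i \<in> I then w (e i) else 0) *\<^sub>R e i)
        + w p *\<^sub>R (\<Sum>i\<in>N. lp i *\<^sub>R e i) + w q *\<^sub>R (\<Sum>i\<in>N. tq i *\<^sub>R e i)"
      unfolding C_def by (simp add: scaleR_add_left sum.distrib scaleR_sum_right)
    also have "(\<Sum>i\<in>N. (if i \<in> I then w (e i) else 0) *\<^sub>R e i) = (\<Sum>i\<in>I. w (e i) *\<^sub>R e i)"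
    proof -
      have "(\<Sum>i\<in>N. (if i \<in> I then w (e i) else 0) *\<^sub>R e i) = (\<Sum>i\<in>N. if i \<in> I then w (e i) *\<^sub>R e i else 0)"
        by (rule sum.cong) auto
      also have "\<dots> = (\<Sum>i\<in>N \<inter> I. w (e i) *\<^sub>R e i)" using finN by (simp add: sum.inter_restrict)
      also have "N \<inter> I = I" using I_sub by auto
      finally show ?thesis .
    qed
    also have "(\<Sum>i\<in>I. w (e i) *\<^sub>R e i) + w p *\<^sub>R (\<Sum>i\<in>N. lp i *\<^sub>R e i) + w q *\<^sub>R (\<Sum>i\<in>N. tq i *\<^sub>R e i)
        = (\<Sum>y\<in>A. w y *\<^sub>R y)"
      using sumA[of "\<lambda>y. w y *\<^sub>R y"] p_N q_N by (simp add: algebra_simps)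
    finally have CS: "(\<Sum>i\<in>N. C i *\<^sub>R e i) = 0" using ws by simp
    have kN: "k \<in> N" using kI I_sub by auto
    have Ca: "C a = w p * lam a" using aI lpa unfolding C_def by simp
    have Cb: "C b = w q * theta b" using bI lpa unfolding C_def by simp
    have Ck: "C k = w (e k) + w p * lam k + w q * theta k"
      using kI I_sub unfolding C_def lp_def tq_def by auto
    have e1: "w q * theta b = w p * lam a" using AE[OF CS bN aN] Ca Cb by simp
    have e2: "w (e k) + w p * lam k + w q * theta k = w p * lam a" using AE[OF CS kN aN] Ca Ck by simp
    have wq: "w q = w p * lam a / theta b" using e1 tb0 by (simp add: field_simps)
    have "w (e k) = w p * lam a - w p * lam k - w q * theta k" using e2 by simp
    also have "\<dots> = (w p * lam a) * (1 - f k)" unfolding f_def wq using la0 tb0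
      by (simp add: field_simps)
    finally show ?thesis using e1 by simp
  qed
  have main: False if fgt: "\<And>k. k \<in> I \<Longrightarrow> 1 < f k"
  proof -
    obtain k0 where k0: "k0 \<in> I" using cI2 by fastforce
    have nc: "\<not> conical_position A" using good unfolding good_position_def .
    show False
    proof (cases "0 \<in> convex hull A")
      case True
      then obtain u where u0: "\<forall>x\<in>A. 0 \<le> u x" and u1: "sum u A = 1" and us: "(\<Sum>x\<in>A. u x *\<^sub>R x) = 0"
        using convex_hull_finite[OF finA] by auto
      define c where "c = u p * lam a"
      have c0: "0 \<le> c" unfolding c_def using u0 la0 A_def by simp
      have "u (e k0) = c * (1 - f k0)" using key[OF us k0] c_def by simp
      moreover have "0 \<le> u (e k0)" using u0 k0 A_def by simp
      moreover have "1 - f k0 < 0" using fgt[OF k0] by simp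
      ultimately have cz: "c = 0" using c0 by (smt (verit) mult_pos_neg)
      have "u p = 0" using cz la0 unfolding c_def by simp
      moreover have "u q = 0" using key[OF us k0] cz tb0 unfolding c_def by simp
      moreover have "\<forall>k\<in>I. u (e k) = 0" using key[OF us] cz unfolding c_def by simp
      ultimately have "sum u A = 0" using sumA[of u] by simp
      then show False using u1 by simp
    next
      case False
      then obtain x where xA: "x \<in> A" and xh: "x \<in> pos_hull (A - {x})"
        using nc unfolding conical_position_def by blast
      then obtain F c where Ff: "finite F" and FA: "F \<subseteq> A - {x}" and c0: "\<forall>y\<in>F. 0 \<le> c y"
        and xs: "x = (\<Sum>y\<in>F. c y *\<^sub>R y)"
        unfolding pos_hull_def by blast
      define w where "w y = (if y = x then -1 else if y \<in> F then c y else 0)" for y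
      have wnn: "0 \<le> w y" if "y \<noteq> x" for y using that c0 unfolding w_def by auto
      have wx: "w x = -1" unfolding w_def by simp
      have ws: "(\<Sum>y\<in>A. w y *\<^sub>R y) = 0"
      proof -
        have "(\<Sum>y\<in>A. w y *\<^sub>R y) = w x *\<^sub>R x + (\<Sum>y\<in>A - {x}. w y *\<^sub>R y)"
          using finA xA by (simp add: sum.remove)
        also have "(\<Sum>y\<in>A - {x}. w y *\<^sub>R y) = (\<Sum>y\<in>A - {x}. if y \<in> F then c y *\<^sub>R y else 0)"
          unfolding w_def by (rule sum.cong) auto
        also have "\<dots> = (\<Sum>y\<in>(A - {x}) \<inter> F. c y *\<^sub>R y)" using finA by (simp add: sum.inter_restrict)
        also have "(A - {x}) \<inter> F = F" using FA by auto
        finally show ?thesis using wx xs by simp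
      qed
      have xcases: "x = p \<or> x = q \<or> (\<exists>j\<in>I. x = e j)" using xA unfolding A_def by auto
      show False
      proof -
        { assume xp: "x = p"
          have "w q * theta b = - lam a" using key[OF ws k0] xp wx by simp
          moreover have "0 \<le> w q" using wnn p_ne_q xp by simp
          ultimately have False using la0 tb0 by (smt (verit) mult_nonneg_nonneg mult_pos_pos) }
        moreover
        { assume xq: "x = q"
          have "w p * lam a = - theta b" using key[OF ws k0] xq wx by simp
          moreover have "0 \<le> w p" using wnn p_ne_q xq by simp
          ultimately have False using la0 tb0 by (smt (verit) mult_nonneg_nonneg mult_pos_pos) }
        moreover
        { fix j assume jI: "j \<in> I" and xj: "x = e j"
          have "card (I - {j}) \<ge> 1" using cI2 jI finI by simp
          then obtain k where kI: "k \<in> I" and kj: "k \<noteq> j"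
            by (metis card.empty ex_in_conv insert_Diff_single insert_iff not_one_le_zero insert_absorb Diff_iff)
          define c0 where "c0 = w p * lam a"
          have "0 \<le> w p" using wnn p_ne_e[OF jI] xj by simp
          then have cnn: "0 \<le> c0" unfolding c0_def using la0 by simp
          have ekj: "e k \<noteq> e j" using injI kI jI kj by (meson inj_on_contraD)
          have "w (e k) = c0 * (1 - f k)" using key[OF ws kI] c0_def by simp
          moreover have "0 \<le> w (e k)" using wnn ekj xj by simp
          moreover have "1 - f k < 0" using fgt[OF kI] by simp
          ultimately have cz: "c0 = 0" using cnn by (smt (verit) mult_pos_neg)
          have "w (e j) = 0" using key[OF ws jI] cz c0_def by simp
          then have False using wx xj by simp }
        ultimately show False using xcases by blast
      qed
    qed
  qed
  have la1: "1 \<le> lam a" using lam_ge aSp by simp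
  have tb1: "1 \<le> theta b" using theta_ge bSq by simp
  have C1: "1 < lam a"
  proof (rule ccontr)
    assume "\<not> 1 < lam a"
    then have l1: "lam a = 1" using la1 by simp
    have "1 < f k" if "k \<in> I" for k
    proof -
      have "1 \<le> lam k" using lam_ge that I_sub by auto
      moreover have "0 < theta k / theta b" using theta_pos that I_sub tb0 by auto
      ultimately show ?thesis unfolding f_def l1 by simp
    qed
    then show False using main by blast
  qed
  have C2: "1 < theta b"
  proof (rule ccontr)
    assume "\<not> 1 < theta b"
    then have l1: "theta b = 1" using tb1 by simp
    have "1 < f k" if "k \<in> I" for k
    proof -
      have "1 \<le> theta k" using theta_ge that I_sub by auto
      moreover have "0 < lam k / lam a" using lam_pos that I_sub la0 by auto
      ultimately show ?thesis unfolding f_def l1 by simp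
    qed
    then show False using main by blast
  qed
  have C3: "lam a + theta b \<le> lam a * theta b"
  proof (rule ccontr)
    assume "\<not> lam a + theta b \<le> lam a * theta b"
    then have h: "1 < 1 / lam a + 1 / theta b" using la0 tb0 by (simp add: field_simps)
    have "1 < f k" if "k \<in> I" for k
    proof -
      have "1 \<le> lam k" using lam_ge that I_sub by auto
      then have "1 / lam a \<le> lam k / lam a" using la0 by (simp add: divide_right_mono)
      moreover have "1 \<le> theta k" using theta_ge that I_sub by auto
      then have "1 / theta b \<le> theta k / theta b" using tb0 by (simp add: divide_right_mono)
      ultimately show ?thesis using h unfolding f_def by simp
    qed
    then show False using main by blast
  qed
  show ?thesis using C1 C2 C3 by simp
qed

end
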